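(* Let $\mathcal{H}$ be a real Hilbert space, let $A,B:\mathcal{H}\rightrightarrows\mathcal{H}$ be operators and let $\beta\in{]0,1[}$. Then \[ \operatorname{zer}\left(A^{(\beta)}+B^{(\beta)}\right)=\beta J_{\frac{1}{2(1-\beta)}(A+B)}(0). \] Consequently, $\operatorname{zer}\left(A^{(\beta)}+B^{(\beta)}\right)\neq\emptyset$ if and only if $0\in\operatorname{ran}\left(\operatorname{Id}+\frac{1}{2(1-\beta)}(A+B)\right)$.
   Context: The resolvent of an operator $T$ is $J_T:=(\operatorname{Id}+T)^{-1}$, i.e. $J_T(x)=\{y: x\in y+T(y)\}$ (a set). The $\beta$-strengthening of $A$ is $A^{(\beta)}(x):=\left(A+(1-\beta)\operatorname{Id}\right)\left(\frac{x}{\beta}\right)$. $\operatorname{zer}T=\{x:0\in T(x)\}$; $\operatorname{ran}$ denotes the range. *)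

theory Defs
  imports "HOL-Analysis.Analysis"
begin

text \<open>Set-valued operators on a real Hilbert space 'a, represented as 'a \<Rightarrow> 'a set.\<close>

type_synonym 'a operator = "'a \<Rightarrow> 'a set"

definition op_add :: "('a::real_vector) operator \<Rightarrow> 'a operator \<Rightarrow> 'a operator" where
  "op_add A B = (\<lambda>x. {a + b | a b. a \<in> A x \<and> b \<in> B x})"

definition op_scale :: "real \<Rightarrow> ('a::real_vector) operator \<Rightarrow> 'a operator" where
  "op_scale c T = (\<lambda>x. (\<lambda>y. c *\<^sub>R y) ` T x)"

definition op_id :: "('a::real_vector) operator" where
  "op_id = (\<lambda>x. {x})"

definition resolvent :: "('a::real_vector) operator \<Rightarrow> 'a operator" where
  "resolvent T = (\<lambda>x. {y. x \<in> op_add op_id T y})"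

definition strengthening :: "real \<Rightarrow> ('a::real_vector) operator \<Rightarrow> 'a operator" where
  "strengthening \<beta> A = (\<lambda>x. op_add A (op_scale (1 - \<beta>) op_id) ((1 / \<beta>) *\<^sub>R x))"

definition zer :: "('a::real_vector) operator \<Rightarrow> 'a set" where
  "zer T = {x. 0 \<in> T x}"

definition ran :: "('a::real_vector) operator \<Rightarrow> 'a set" where
  "ran T = (\<Union>x. T x)"

end

theory Submission
  imports Defs
begin

lemma key:
  fixes A B :: "('a::real_vector) operator" and \<beta> :: real
  assumes "0 < \<beta>" and "\<beta> < 1"
  shows "(0 \<in> op_add (strengthening \<beta> A) (strengthening \<beta> B) (\<beta> *\<^sub>R y))
     = (0 \<in> op_add op_id (op_scale (1 / (2 * (1 - \<beta>))) (op_add A B)) y)"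
proof -
  have yy: "(1 / \<beta>) *\<^sub>R (\<beta> *\<^sub>R y) = y" using assms by simp
  have L: "(0 \<in> op_add (strengthening \<beta> A) (strengthening \<beta> B) (\<beta> *\<^sub>R y))
     = (\<exists>a\<in>A y. \<exists>b\<in>B y. a + (1 - \<beta>) *\<^sub>R y + (b + (1 - \<beta>) *\<^sub>R y) = 0)"
    unfolding op_add_def strengthening_def op_scale_def op_id_def yy by auto
  have R: "(0 \<in> op_add op_id (op_scale (1 / (2 * (1 - \<beta>))) (op_add A B)) y)
     = (\<exists>a\<in>A y. \<exists>b\<in>B y. y + (1 / (2 * (1 - \<beta>))) *\<^sub>R (a + b) = 0)"
    unfolding op_add_def op_scale_def op_id_def by auto
  have E: "(a + (1 - \<beta>) *\<^sub>R y + (b + (1 - \<beta>) *\<^sub>R y) = 0)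
       = (y + (1 / (2 * (1 - \<beta>))) *\<^sub>R (a + b) = 0)" for a b
  proof -
    let ?c = "2 * (1 - \<beta>)"
    have c: "?c \<noteq> 0" using assms by simp
    have "a + (1 - \<beta>) *\<^sub>R y + (b + (1 - \<beta>) *\<^sub>R y) = ?c *\<^sub>R (y + (1 / ?c) *\<^sub>R (a + b))"
    proof -
      have 1: "?c *\<^sub>R (y + (1 / ?c) *\<^sub>R (a + b)) = ?c *\<^sub>R y + (a + b)"
        using c by (simp add: scaleR_add_right)
      have 2: "?c *\<^sub>R y = (1 - \<beta>) *\<^sub>R y + (1 - \<beta>) *\<^sub>R y"
        by (metis mult_2 scaleR_add_left)
      show ?thesis unfolding 1 2 by (simp add: algebra_simps)
    qed
    then show ?thesis using c by simp
  qed
  show ?thesis unfolding L R E ..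
qed

theorem proposition3p4:
  fixes A B :: "('a::{real_inner, complete_space}) operator" and \<beta> :: real
  assumes "0 < \<beta>" and "\<beta> < 1"
  shows "zer (op_add (strengthening \<beta> A) (strengthening \<beta> B))
           = (\<lambda>y. \<beta> *\<^sub>R y) ` resolvent (op_scale (1 / (2 * (1 - \<beta>))) (op_add A B)) 0
         \<and> (zer (op_add (strengthening \<beta> A) (strengthening \<beta> B)) \<noteq> {}
           \<longleftrightarrow> 0 \<in> ran (op_add op_id (op_scale (1 / (2 * (1 - \<beta>))) (op_add A B))))"
proof -
  let ?S = "op_add (strengthening \<beta> A) (strengthening \<beta> B)"
  let ?T = "op_add op_id (op_scale (1 / (2 * (1 - \<beta>))) (op_add A B))"
  have Z: "zer ?S = (\<lambda>y. \<beta> *\<^sub>R y) ` {y. 0 \<in> ?T y}"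
  proof (rule set_eqI, rule iffI)
    fix x assume "x \<in> zer ?S"
    hence "0 \<in> ?S (\<beta> *\<^sub>R ((1/\<beta>) *\<^sub>R x))" using assms(1) by (simp add: zer_def)
    hence "0 \<in> ?T ((1/\<beta>) *\<^sub>R x)" using key[OF assms] by blast
    moreover have "x = \<beta> *\<^sub>R ((1/\<beta>) *\<^sub>R x)" using assms(1) by simp
    ultimately show "x \<in> (\<lambda>y. \<beta> *\<^sub>R y) ` {y. 0 \<in> ?T y}" by blast
  next
    fix x assume "x \<in> (\<lambda>y. \<beta> *\<^sub>R y) ` {y. 0 \<in> ?T y}"
    then obtain y where "x = \<beta> *\<^sub>R y" "0 \<in> ?T y" by blast
    thus "x \<in> zer ?S" using key[OF assms, of A B y] by (simp add: zer_def)
  qed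
  have J: "resolvent (op_scale (1 / (2 * (1 - \<beta>))) (op_add A B)) 0 = {y. 0 \<in> ?T y}"
    by (simp add: resolvent_def)
  show ?thesis unfolding Z J by (auto simp: ran_def)
qed

end
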